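(* Let $f\in\mathcal H_0$ and let $u$ solve $\partial_tu+\partial J(u)\ni0$, $u(0)=f$, with extinction time $T_{\mathrm{ex}}$. Then for $0\le t<T_{\mathrm{ex}}$: $$\|u(t)\|^{2-p}\le\|f\|^{2-p}-(2-p)\lambda_1t\quad(p<2),\qquad \|u(t)\|^2\le\|f\|^2e^{-2\lambda_1t}\quad(p=2),$$ $$\|u(t)\|^{p-2}\le\frac{1}{\|f\|^{2-p}+(p-2)\lambda_1t}\quad(p>2).$$
   Context: $\mathcal H$ is a real Hilbert space with inner product $\langle\cdot,\cdot\rangle$ and norm $\|\cdot\|$; $p\ge1$. $J:\mathcal H\to\mathbb R\cup\{\infty\}$ is convex, lower semicontinuous, proper, with dense effective domain, and absolutely $p$-homogeneous: $J(cu)=|c|^pJ(u)$ for $c\ne0$, $J(0)=0$. Standing coercivity assumption: $\lambda_1:=\inf_{u\in\mathcal H_0}pJ(u)/\|u\|^p>0$. $\partial J(u)=\{\zeta: J(u)+\langle\zeta,v-u\rangle\le J(v)\ \forall v\}$; $\mathcal N(J)=\{u:J(u)=0\}$; $\mathcal H_0:=\mathcal N(J)^\perp\setminus\{0\}$. The gradient flow solution (Brezis) is the unique continuous $u:[0,\infty)\to\mathcal H$, Lipschitz on $[\delta,\infty)$ for all $\delta>0$, right-differentiable on $(0,\infty)$ with $u(0)=f$ and $\partial_t^+u(t)=-\zeta(t)$, $\zeta(t)$ the minimal-norm element of $\partial J(u(t))$. $T_{\mathrm{ex}}:=\inf\{T>0:u(t)=0\ \forall t\ge T\}\in(0,\infty]$.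 *)

theory Defs
  imports "HOL-Analysis.Analysis" "HOL-Library.Extended_Real"
begin

text \<open>Functionals J : H -> R \<union> {infinity} are modelled as maps into ereal;
  properness excludes the value minus infinity.\<close>

definition convex_fun :: "('a::real_vector \<Rightarrow> ereal) \<Rightarrow> bool" where
  "convex_fun J \<longleftrightarrow> (\<forall>x y t. 0 < t \<and> t < 1 \<longrightarrow>
      J (t *\<^sub>R x + (1 - t) *\<^sub>R y) \<le> ereal t * J x + ereal (1 - t) * J y)"

definition lsc_fun :: "('a::topological_space \<Rightarrow> ereal) \<Rightarrow> bool" where
  "lsc_fun J \<longleftrightarrow> (\<forall>c. closed {x. J x \<le> c})"

definition proper_fun :: "('a \<Rightarrow> ereal) \<Rightarrow> bool" where
  "proper_fun J \<longleftrightarrow> (\<forall>x. J x \<noteq> -\<infinity>) \<and> (\<exists>x. J x \<noteq> \<infinity>)"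

definition eff_dom :: "('a \<Rightarrow> ereal) \<Rightarrow> 'a set" where
  "eff_dom J = {x. J x < \<infinity>}"

definition abs_homogeneous :: "real \<Rightarrow> ('a::real_vector \<Rightarrow> ereal) \<Rightarrow> bool" where
  "abs_homogeneous p J \<longleftrightarrow> J 0 = 0 \<and>
      (\<forall>c u. c \<noteq> 0 \<longrightarrow> J (c *\<^sub>R u) = ereal (\<bar>c\<bar> powr p) * J u)"

definition nullspace_J :: "('a::real_vector \<Rightarrow> ereal) \<Rightarrow> 'a set" where
  "nullspace_J J = {u. J u = 0}"

definition H0 :: "('a::real_inner \<Rightarrow> ereal) \<Rightarrow> 'a set" where
  "H0 J = {u. \<forall>n\<in>nullspace_J J. inner u n = 0} - {0}"

definition lambda1 :: "real \<Rightarrow> ('a::real_inner \<Rightarrow> ereal) \<Rightarrow> ereal" where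
  "lambda1 p J = (INF u\<in>H0 J. ereal p * J u / ereal (norm u powr p))"

definition subdiff :: "('a::real_inner \<Rightarrow> ereal) \<Rightarrow> 'a \<Rightarrow> 'a set" where
  "subdiff J u = {\<zeta>. \<forall>v. J u + ereal (inner \<zeta> (v - u)) \<le> J v}"

definition min_norm_elem :: "'a::real_normed_vector set \<Rightarrow> 'a \<Rightarrow> bool" where
  "min_norm_elem S z \<longleftrightarrow> z \<in> S \<and> (\<forall>w\<in>S. norm z \<le> norm w)"

definition gradient_flow :: "('a::real_inner \<Rightarrow> ereal) \<Rightarrow> 'a \<Rightarrow> (real \<Rightarrow> 'a) \<Rightarrow> bool" where
  "gradient_flow J f u \<longleftrightarrow>
     continuous_on {0..} u \<and>
     (\<forall>\<delta>>0. \<exists>L. L-lipschitz_on {\<delta>..} u) \<and>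
     u 0 = f \<and>
     (\<forall>t>0. \<exists>\<zeta>. min_norm_elem (subdiff J (u t)) \<zeta> \<and>
              (u has_vector_derivative (- \<zeta>)) (at t within {t..}))"

definition extinction_time :: "(real \<Rightarrow> 'a::zero) \<Rightarrow> ereal" where
  "extinction_time u = (INF T\<in>{T. T > 0 \<and> (\<forall>t\<ge>T. u t = 0)}. ereal T)"

end

theory Submission
  imports Defs
begin


lemma cont_le_at_end:
  fixes f :: "real \<Rightarrow> real"
  assumes "a < c" "continuous_on {a..c} f" "\<forall>x\<in>{a..<c}. f x \<le> 0"
  shows "f c \<le> 0"
proof -
  have lim: "(f \<longlongrightarrow> f c) (at c within {a..c})"
    using assms(2) assms(1) by (simp add: continuous_on_def)
  have nt: "at c within {a..c} \<noteq> bot"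
    using assms(1) by (simp add: trivial_limit_within islimpt_Icc)
  have ev: "eventually (\<lambda>x. f x \<le> 0) (at c within {a..c})"
    unfolding eventually_at_filter using assms(3) by (auto intro!: always_eventually)
  show ?thesis using tendsto_upperbound[OF lim ev nt] .
qed

lemma right_deriv_nonpos_eps:
  fixes g :: "real \<Rightarrow> real"
  assumes ab: "a \<le> b" and cont: "continuous_on {a..b} g"
    and der: "\<And>x. a < x \<Longrightarrow> x < b \<Longrightarrow> (g has_real_derivative D x) (at x within {x..}) \<and> D x \<le> 0"
    and eps: "\<epsilon> > 0"
  shows "g b \<le> g a + \<epsilon> * (b - a) + \<epsilon>"
proof -
  define h where "h x = g a + \<epsilon> * (x - a) + \<epsilon>" for x
  define S where "S = {x\<in>{a..b}. \<forall>y\<in>{a..x}. g y \<le> h y}"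
  define c where "c = Sup S"
  have aS: "a \<in> S" using eps ab by (auto simp: S_def h_def)
  have bdd: "bdd_above S" by (auto simp: S_def bdd_above_def)
  have ac: "a \<le> c" unfolding c_def using aS bdd by (rule cSup_upper)
  have cb: "c \<le> b" unfolding c_def using aS by (intro cSup_least) (auto simp: S_def)
  have c1: "\<forall>y\<in>{a..<c}. g y \<le> h y"
  proof
    fix y assume y: "y \<in> {a..<c}"
    then have "y < Sup S" by (simp add: c_def)
    then obtain x where "x \<in> S" "y < x" using less_cSup_iff[OF _ bdd] aS by blast
    then show "g y \<le> h y" using y by (auto simp: S_def)
  qed
  have c2: "g c \<le> h c"
  proof (cases "a = c")
    case True then show ?thesis using eps by (simp add: h_def)
  next
    case False
    have "(\<lambda>x. g x - h x) c \<le> 0"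
    proof (rule cont_le_at_end[of a c])
      show "a < c" using False ac by simp
      show "continuous_on {a..c} (\<lambda>x. g x - h x)" unfolding h_def
        using cont cb by (auto intro!: continuous_intros elim: continuous_on_subset)
      show "\<forall>x\<in>{a..<c}. g x - h x \<le> 0" using c1 by auto
    qed
    then show ?thesis by simp
  qed
  have cS: "\<forall>y\<in>{a..c}. g y \<le> h y" using c1 c2 by (metis atLeastAtMost_iff atLeastLessThan_iff order_le_less)
  have "c = b"
  proof (rule ccontr)
    assume "c \<noteq> b" then have cb': "c < b" using cb by simp
    have "\<exists>d>0. \<forall>y. c < y \<and> y < c + d \<longrightarrow> g y \<le> h y"
    proof (cases "a = c")
      case True
      have "((\<lambda>x. g x - h x) \<longlongrightarrow> g c - h c) (at c within {a..b})"
        using cont True ab unfolding h_def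
        by (intro tendsto_intros) (auto simp: continuous_on_def)
      moreover have "g c - h c < 0" using True eps by (simp add: h_def)
      ultimately have "eventually (\<lambda>x. g x - h x < 0) (at c within {a..b})"
        by (rule order_tendstoD)
      then obtain d where d: "d > 0" "\<And>x. x \<in> {a..b} \<Longrightarrow> x \<noteq> c \<Longrightarrow> dist x c < d \<Longrightarrow> g x - h x < 0"
        unfolding eventually_at by blast
      show ?thesis
        apply (rule exI[of _ "min d (b - c)"])
        using d cb' True by (auto simp: dist_real_def intro!: less_imp_le)
    next
      case False
      then have ac': "a < c" using ac by simp
      from der[OF ac' cb'] have dc: "(g has_real_derivative D c) (at c within {c..})" "D c \<le> 0" by auto
      from dc(1) have "((\<lambda>y. (g y - g c) / (y - c)) \<longlongrightarrow> D c) (at c within {c..})"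
        by (simp add: has_field_derivative_iff)
      moreover have "D c < D c + \<epsilon>" using eps by simp
      ultimately have "eventually (\<lambda>y. (g y - g c) / (y - c) < D c + \<epsilon>) (at c within {c..})"
        by (rule order_tendstoD)
      then obtain d where d: "d > 0" "\<And>x. x \<in> {c..} \<Longrightarrow> x \<noteq> c \<Longrightarrow> dist x c < d \<Longrightarrow> (g x - g c) / (x - c) < D c + \<epsilon>"
        unfolding eventually_at by blast
      show ?thesis
      proof (rule exI[of _ d], safe)
        show "d > 0" by fact
        fix y assume y: "c < y" "y < c + d"
        then have "(g y - g c) / (y - c) < D c + \<epsilon>" using d(2)[of y] by (auto simp: dist_real_def)
        then have "g y - g c < (D c + \<epsilon>) * (y - c)" using y by (simp add: field_simps)
        also have "\<dots> \<le> \<epsilon> * (y - c)" using dc(2) y by (intro mult_right_mono) auto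
        finally show "g y \<le> h y" using c2 by (simp add: h_def algebra_simps)
      qed
    qed
    then obtain d where d: "d > 0" "\<And>y. c < y \<Longrightarrow> y < c + d \<Longrightarrow> g y \<le> h y" by blast
    define y where "y = min (c + d/2) b"
    have "y \<in> S" unfolding S_def
    proof (safe)
      show "y \<in> {a..b}" using ac cb' d by (auto simp: y_def)
      fix z assume z: "z \<in> {a..y}"
      show "g z \<le> h z"
      proof (cases "z \<le> c")
        case True then show ?thesis using cS z by auto
      next
        case False
        then show ?thesis using z d by (intro d(2)) (auto simp: y_def)
      qed
    qed
    then have "y \<le> c" unfolding c_def using bdd by (rule cSup_upper)
    then show False using cb' d by (auto simp: y_def)
  qed
  then show ?thesis using c2 by (simp add: h_def)
qed

lemma right_deriv_nonpos:
  fixes g :: "real \<Rightarrow> real"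
  assumes ab: "a \<le> b" and cont: "continuous_on {a..b} g"
    and der: "\<And>x. a < x \<Longrightarrow> x < b \<Longrightarrow> (g has_real_derivative D x) (at x within {x..}) \<and> D x \<le> 0"
  shows "g b \<le> g a"
proof (rule ccontr)
  assume "\<not> g b \<le> g a"
  then have pos: "g b - g a > 0" by simp
  define e where "e = (g b - g a) / (2 * (b - a + 1))"
  have e: "e > 0" using pos ab by (simp add: e_def)
  have "g b \<le> g a + e * (b - a) + e" by (rule right_deriv_nonpos_eps[OF ab cont der e]) auto
  moreover have "e * (b - a) + e = e * (b - a + 1)" by (simp add: algebra_simps)
  moreover have "e * (b - a + 1) = (g b - g a) / 2" using ab unfolding e_def
    by (simp add: divide_simps)
  ultimately show False using pos by simp
qed



lemma subdiff_finite:
  assumes "proper_fun J" "\<zeta> \<in> subdiff J u"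
  shows "\<exists>j. J u = ereal j"
proof -
  obtain v where v: "J v \<noteq> \<infinity>" using assms(1) by (auto simp: proper_fun_def)
  have "J v \<noteq> -\<infinity>" "J u \<noteq> -\<infinity>" using assms(1) by (auto simp: proper_fun_def)
  moreover have "J u + ereal (inner \<zeta> (v - u)) \<le> J v" using assms(2) by (auto simp: subdiff_def)
  ultimately have "J u \<noteq> \<infinity>" using v by auto
  then show ?thesis using \<open>J u \<noteq> -\<infinity>\<close> by (cases "J u") auto
qed

lemma euler_ge:
  assumes hom: "abs_homogeneous p J" and ju: "J u = ereal j" and z: "\<zeta> \<in> subdiff J u"
  shows "p * j \<le> inner \<zeta> u"
proof -
  have ineq: "(c powr p - 1) / (c - 1) * j \<le> inner \<zeta> u" if c: "0 < c" "c < 1" for c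
  proof -
    have "J u + ereal (inner \<zeta> (c *\<^sub>R u - u)) \<le> J (c *\<^sub>R u)" using z by (auto simp: subdiff_def)
    moreover have "J (c *\<^sub>R u) = ereal (c powr p * j)" using hom c ju by (auto simp: abs_homogeneous_def)
    ultimately have "j + (c - 1) * inner \<zeta> u \<le> c powr p * j" using ju
      by (simp add: inner_diff_right algebra_simps)
    then have "(c - 1) * inner \<zeta> u \<le> (c powr p - 1) * j" by (simp add: algebra_simps)
    then show ?thesis using c by (simp add: divide_simps mult.commute)
  qed
  have "((\<lambda>c. c powr p) has_real_derivative p * 1 powr (p - 1)) (at 1)"
    by (auto intro!: derivative_eq_intros)
  then have "((\<lambda>c. (c powr p - 1 powr p) / (c - 1)) \<longlongrightarrow> p) (at 1)"
    by (simp add: has_field_derivative_iff)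
  then have "((\<lambda>c. (c powr p - 1) / (c - 1)) \<longlongrightarrow> p) (at_left 1)"
    by (simp add: filterlim_at_split)
  then have lim: "((\<lambda>c. (c powr p - 1) / (c - 1) * j) \<longlongrightarrow> p * j) (at_left 1)"
    by (intro tendsto_intros)
  have ev: "eventually (\<lambda>c. (c powr p - 1) / (c - 1) * j \<le> inner \<zeta> u) (at_left (1::real))"
  proof -
    have "eventually (\<lambda>c. c \<in> {0<..<1}) (at_left (1::real))" by (rule eventually_at_left_real) simp
    then show ?thesis by eventually_elim (use ineq in auto)
  qed
  show ?thesis using tendsto_upperbound[OF lim ev] by simp
qed

lemma null_orth:
  assumes conv: "convex_fun J" and hom: "abs_homogeneous p J" and ju: "J u = ereal j"
    and z: "\<zeta> \<in> subdiff J u" and jn: "J n = 0"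
  shows "inner \<zeta> n = 0"
proof -
  define K where "K = 2 powr p * j / 2 - j"
  have bnd: "s * inner \<zeta> n \<le> K" if False: "s \<noteq> 0" for s
  proof -
    have "J ((1/2) *\<^sub>R (2 *\<^sub>R u) + (1 - 1/2) *\<^sub>R ((2 * s) *\<^sub>R n)) \<le>
          ereal (1/2) * J (2 *\<^sub>R u) + ereal (1 - 1/2) * J ((2 * s) *\<^sub>R n)"
      using conv unfolding convex_fun_def by (metis field_sum_of_halves half_gt_zero_iff zero_less_one less_add_same_cancel1)
    moreover have "J (2 *\<^sub>R u) = ereal (2 powr p * j)" using hom ju by (simp add: abs_homogeneous_def)
    moreover have "J ((2 * s) *\<^sub>R n) = 0" using hom jn False by (simp add: abs_homogeneous_def)
    moreover have "(1/2) *\<^sub>R (2 *\<^sub>R u) + (1 - 1/2) *\<^sub>R ((2 * s) *\<^sub>R n) = u + s *\<^sub>R n"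
      by (simp add: scaleR_add_right)
    ultimately have A: "J (u + s *\<^sub>R n) \<le> ereal (2 powr p * j / 2)" by simp
    have "J u + ereal (inner \<zeta> (u + s *\<^sub>R n - u)) \<le> J (u + s *\<^sub>R n)" using z unfolding subdiff_def by blast
    then have "ereal (j + s * inner \<zeta> n) \<le> J (u + s *\<^sub>R n)" using ju by simp
    from this A have "ereal (j + s * inner \<zeta> n) \<le> ereal (2 powr p * j / 2)" by (rule order_trans)
    then have "j + s * inner \<zeta> n \<le> 2 powr p * j / 2" by simp
    then show ?thesis by (simp add: K_def)
  qed
  show ?thesis
  proof (rule ccontr)
    assume ne: "inner \<zeta> n \<noteq> 0"
    have "(\<bar>K\<bar> + 1) / inner \<zeta> n * inner \<zeta> n \<le> K" proof (rule bnd)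
      have "\<bar>K\<bar> + 1 \<noteq> 0" by linarith
      then show "(\<bar>K\<bar> + 1) / inner \<zeta> n \<noteq> 0" using ne by simp
    qed
    then show False using ne by simp
  qed
qed

lemma lambda_bound:
  assumes "u \<in> H0 J" "J u = ereal j" "p > 0" "lambda1 p J = ereal l"
  shows "l * norm u powr p \<le> p * j"
proof -
  have "lambda1 p J \<le> ereal p * J u / ereal (norm u powr p)"
    unfolding lambda1_def using assms(1) by (rule INF_lower)
  also have "\<dots> = ereal (p * j / norm u powr p)" using assms by (simp add: H0_def)
  finally have "l \<le> p * j / norm u powr p" using assms by simp
  moreover have "norm u powr p > 0" using assms by (simp add: H0_def)
  ultimately show ?thesis by (simp add: divide_simps)
qed



lemma vd_inner_const:
  assumes "(u has_vector_derivative v) F"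
  shows "((\<lambda>r. inner (u r) n) has_real_derivative inner v n) F"
proof -
  from assms have "(u has_derivative (\<lambda>h. h *\<^sub>R v)) F" by (simp add: has_vector_derivative_def)
  then have "((\<lambda>r. inner (u r) n) has_derivative (\<lambda>h. inner (h *\<^sub>R v) n)) F"
    by (rule has_derivative_inner_left)
  moreover have "(\<lambda>h. inner (h *\<^sub>R v) n) = (*) (inner v n)" by (auto simp: fun_eq_iff)
  ultimately show ?thesis
    by (simp add: has_field_derivative_def)
qed

lemma vd_norm2:
  assumes "(u has_vector_derivative v) (at x within S)"
  shows "((\<lambda>r. inner (u r) (u r)) has_real_derivative 2 * inner (u x) v) (at x within S)"
proof -
  from assms have d: "(u has_derivative (\<lambda>h. h *\<^sub>R v)) (at x within S)" by (simp add: has_vector_derivative_def)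
  have "((\<lambda>r. inner (u r) (u r)) has_derivative (\<lambda>h. inner (u x) (h *\<^sub>R v) + inner (h *\<^sub>R v) (u x))) (at x within S)"
    by (rule has_derivative_inner[OF d d])
  moreover have "(\<lambda>h. inner (u x) (h *\<^sub>R v) + inner (h *\<^sub>R v) (u x)) = (*) (2 * inner (u x) v)"
    by (auto simp: inner_commute algebra_simps)
  ultimately show ?thesis by (simp add: has_field_derivative_def)
qed

lemma sq_powr:
  fixes N :: real assumes "N > 0" shows "(N^2) powr a = N powr (2*a)"
proof -
  have e: "N^2 = N powr 2" using assms by (simp add: powr_numeral)
  show ?thesis unfolding e by (rule powr_powr)
qed

theorem corollary3:
  fixes J :: "'a::{real_inner, complete_space} \<Rightarrow> ereal"
    and p :: real and f :: 'a and u :: "real \<Rightarrow> 'a"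
  assumes "p \<ge> 1"
    and "convex_fun J" and "lsc_fun J" and "proper_fun J"
    and "closure (eff_dom J) = UNIV"
    and "abs_homogeneous p J"
    and "0 < lambda1 p J"
    and "f \<in> H0 J"
    and "gradient_flow J f u"
    and "0 \<le> t" and "ereal t < extinction_time u"
  shows "(p < 2 \<longrightarrow> norm (u t) powr (2 - p) \<le>
            norm f powr (2 - p) - (2 - p) * real_of_ereal (lambda1 p J) * t)
       \<and> (p = 2 \<longrightarrow> norm (u t) ^ 2 \<le> norm f ^ 2 * exp (- 2 * real_of_ereal (lambda1 p J) * t))
       \<and> (p > 2 \<longrightarrow> norm (u t) powr (p - 2) \<le>
            1 / (norm f powr (2 - p) + (p - 2) * real_of_ereal (lambda1 p J) * t))"
proof (cases "t = 0")
  case True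
  have gf: "u 0 = f" using assms(9) by (simp add: gradient_flow_def)
  have "norm f powr (p - 2) = 1 / norm f powr (2 - p)"
    using powr_minus_divide[of "norm f" "2 - p"] by simp
  then show ?thesis using True gf by simp
next
  case False
  then have tpos: "t > 0" using assms(10) by simp
  have p0: "p > 0" using assms(1) by simp
  note gf = assms(9)[unfolded gradient_flow_def]
  have contu: "continuous_on {0..} u" and u0: "u 0 = f" using gf by auto
  have cu: "continuous_on {a..b} u" if "0 \<le> a" for a b
    using contu by (rule continuous_on_subset) (use that in auto)
  from gf have "\<forall>s. \<exists>\<zeta>. s > 0 \<longrightarrow> min_norm_elem (subdiff J (u s)) \<zeta> \<and>
      (u has_vector_derivative (- \<zeta>)) (at s within {s..})" by blast
  then obtain Z where Z: "\<And>s. s > 0 \<Longrightarrow> min_norm_elem (subdiff J (u s)) (Z s) \<and>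
      (u has_vector_derivative (- Z s)) (at s within {s..})" by metis
  have Zsub: "Z s \<in> subdiff J (u s)" if "s > 0" for s using Z[OF that] by (simp add: min_norm_elem_def)
  have Zder: "(u has_vector_derivative (- Z s)) (at s within {s..})" if "s > 0" for s using Z[OF that] by simp
  have jfin: "J (u s) = ereal (real_of_ereal (J (u s)))" if "s > 0" for s
    using subdiff_finite[OF assms(4) Zsub[OF that]] by auto
  have f0: "f \<noteq> 0" "\<And>n. J n = 0 \<Longrightarrow> inner f n = 0"
    using assms(8) by (auto simp: H0_def nullspace_J_def)
  have orth: "inner (u s) n = 0" if s: "0 \<le> s" and jn: "J n = 0" for s n
  proof -
    have dz: "inner (Z x) n = 0" if "0 < x" for x
      by (rule null_orth[OF assms(2) assms(6) jfin[OF that] Zsub[OF that] jn])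
    have d1: "((\<lambda>r. inner (u r) n) has_real_derivative 0) (at x within {x..})" if "0 < x" for x
    proof -
      have e: "inner (- Z x) n = 0" using dz[OF that] by (simp only: inner_minus_left neg_equal_0_iff_equal)
      show ?thesis using vd_inner_const[OF Zder[OF that], of n] unfolding e .
    qed
    have d2: "((\<lambda>r. - inner (u r) n) has_real_derivative 0) (at x within {x..})" if "0 < x" for x
      using DERIV_minus[OF d1[OF that]] by (simp only: minus_zero)
    have c1: "continuous_on {0..s} (\<lambda>r. inner (u r) n)"
      using cu[of 0 s] by (intro continuous_intros) auto
    have c2: "continuous_on {0..s} (\<lambda>r. - inner (u r) n)"
      using c1 by (rule continuous_on_minus)
    have "inner (u s) n \<le> inner (u 0) n"
      by (rule right_deriv_nonpos[OF s c1, where D="\<lambda>_. 0"]) (use d1 in auto)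
    moreover have "- inner (u s) n \<le> - inner (u 0) n"
      by (rule right_deriv_nonpos[OF s c2, where D="\<lambda>_. 0"]) (use d2 in auto)
    ultimately show ?thesis using u0 f0(2)[OF jn] by simp
  qed
  have inH0: "u s \<in> H0 J" if "0 \<le> s" "u s \<noteq> 0" for s
    using orth[OF that(1)] that(2) by (auto simp: H0_def nullspace_J_def)
  have ext_le: "extinction_time u \<le> ereal s" if "s > 0" "\<forall>r\<ge>s. u r = 0" for s
    unfolding extinction_time_def using that by (intro INF_lower) auto
  obtain r where r: "r \<ge> t" "u r \<noteq> 0"
  proof -
    have "\<exists>r\<ge>t. u r \<noteq> 0"
    proof (rule ccontr)
      assume "\<not> ?thesis"
      then have "extinction_time u \<le> ereal t" using ext_le[OF tpos] by auto
      then show False using assms(11) by simp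
    qed
    then show ?thesis using that by blast
  qed
  have rpos: "r > 0" using r tpos by simp
  obtain l where lam: "lambda1 p J = ereal l"
  proof -
    have "lambda1 p J \<le> ereal p * J (u r) / ereal (norm (u r) powr p)"
      unfolding lambda1_def using inH0[of r] r rpos by (intro INF_lower) auto
    also have "\<dots> = ereal (p * real_of_ereal (J (u r)) / norm (u r) powr p)"
    proof -
      have "norm (u r) powr p \<noteq> 0" using r by simp
      then show ?thesis by (subst jfin[OF rpos]) simp
    qed
    finally have "lambda1 p J \<noteq> \<infinity>" by auto
    moreover have "lambda1 p J \<noteq> -\<infinity>" using assms(7) by auto
    ultimately show ?thesis using that by (cases "lambda1 p J") auto
  qed
  have lpos: "l > 0" using assms(7) lam by simp
  have rl: "real_of_ereal (lambda1 p J) = l" using lam by simp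
  have key: "l * norm (u s) powr p \<le> inner (Z s) (u s)" if "0 < s" for s
  proof (cases "u s = 0")
    case True then show ?thesis by simp
  next
    case False
    have "l * norm (u s) powr p \<le> p * real_of_ereal (J (u s))"
      by (rule lambda_bound[OF inH0[OF _ False] jfin[OF that] p0 lam]) (use that in simp)
    also have "\<dots> \<le> inner (Z s) (u s)"
      by (rule euler_ge[OF assms(6) jfin[OF that] Zsub[OF that]])
    finally show ?thesis .
  qed
  define \<phi> where "\<phi> s = inner (u s) (u s)" for s
  have d\<phi>: "(\<phi> has_real_derivative - 2 * inner (Z s) (u s)) (at s within {s..})" if "0 < s" for s
    using vd_norm2[OF Zder[OF that]] unfolding \<phi>_def by (simp add: inner_commute)
  have c\<phi>: "continuous_on {a..b} \<phi>" if "0 \<le> a" for a b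
    unfolding \<phi>_def using cu[OF that] by (intro continuous_intros) auto
  have \<phi>n: "\<phi> s = norm (u s) ^ 2" for s by (simp add: \<phi>_def power2_norm_eq_inner)
  have Dneg: "- 2 * inner (Z s) (u s) \<le> 0" if "0 < s" for s
    using key[OF that] lpos by (smt (verit) mult_nonneg_nonneg powr_ge_zero)
  have nz: "u s \<noteq> 0" if s: "0 \<le> s" "s \<le> t" for s
  proof
    assume us: "u s = 0"
    have all0: "u r' = 0" if "r' \<ge> s" for r'
    proof -
      have "\<phi> r' \<le> \<phi> s"
        by (rule right_deriv_nonpos[OF that c\<phi>[OF s(1)], where D="\<lambda>x. - 2 * inner (Z x) (u x)"])
           (use d\<phi> Dneg s in auto)
      then have "\<phi> r' \<le> 0" using us by (simp add: \<phi>_def)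
      then show ?thesis by (metis \<phi>_def antisym inner_ge_zero inner_eq_zero_iff)
    qed
    show False
    proof (cases "s = 0")
      case True then show False using us u0 f0 by simp
    next
      case False
      then have "extinction_time u \<le> ereal s" using s all0 by (intro ext_le) auto
      with assms(11) have "ereal t < ereal s" by (rule less_le_trans)
      then show False using s by simp
    qed
  qed
  have \<phi>pos: "\<phi> s > 0" if "0 \<le> s" "s \<le> t" for s
    using nz[OF that] by (simp add: \<phi>n)
  have c\<phi>t: "continuous_on {0..t} \<phi>" using c\<phi>[of 0] by simp
  have pw: "\<phi> s powr ((2 - p) / 2) = norm (u s) powr (2 - p)" if "0 \<le> s" "s \<le> t" for s
  proof -
    have N: "norm (u s) > 0" using nz[OF that] by simp
    have "2 * ((2 - p) / 2) = 2 - p" by simp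
    then show ?thesis unfolding \<phi>n sq_powr[OF N] by presburger
  qed
  have f2: "\<phi> 0 = norm f ^ 2" using u0 by (simp add: \<phi>n)
  show ?thesis
  proof (cases "p = 2")
    case True
    define \<psi> where "\<psi> s = \<phi> s * exp (2 * l * s)" for s
    have "\<psi> t \<le> \<psi> 0"
    proof (rule right_deriv_nonpos[OF assms(10), where D = "\<lambda>x. \<phi> x * (exp (2 * l * x) * (2 * l)) + (- 2 * inner (Z x) (u x)) * exp (2 * l * x)"])
      show "continuous_on {0..t} \<psi>" unfolding \<psi>_def using c\<phi>t by (intro continuous_intros)
      fix x assume x: "0 < x" "x < t"
      have de: "((\<lambda>s. exp (2 * l * s)) has_real_derivative exp (2 * l * x) * (2 * l)) (at x within {x..})"
        by (auto intro!: derivative_eq_intros)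
      show "(\<psi> has_real_derivative \<phi> x * (exp (2 * l * x) * (2 * l)) + (- 2 * inner (Z x) (u x)) * exp (2 * l * x)) (at x within {x..}) \<and>
        \<phi> x * (exp (2 * l * x) * (2 * l)) + (- 2 * inner (Z x) (u x)) * exp (2 * l * x) \<le> 0"
      proof
        show "(\<psi> has_real_derivative \<phi> x * (exp (2 * l * x) * (2 * l)) + (- 2 * inner (Z x) (u x)) * exp (2 * l * x)) (at x within {x..})"
          unfolding \<psi>_def by (rule DERIV_mult'[OF d\<phi>[OF x(1)] de])
        have k: "l * \<phi> x \<le> inner (Z x) (u x)"
          using key[OF x(1)] True by (simp add: \<phi>n powr_numeral)
        have "\<phi> x * (exp (2 * l * x) * (2 * l)) + (- 2 * inner (Z x) (u x)) * exp (2 * l * x)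
            = 2 * exp (2 * l * x) * (l * \<phi> x - inner (Z x) (u x))" by (simp add: algebra_simps)
        also have "\<dots> \<le> 0" using k by (intro mult_nonneg_nonpos) auto
        finally show "\<phi> x * (exp (2 * l * x) * (2 * l)) + (- 2 * inner (Z x) (u x)) * exp (2 * l * x) \<le> 0" .
      qed
    qed
    then have "\<phi> t * exp (2 * l * t) \<le> norm f ^ 2" using f2 by (simp add: \<psi>_def)
    then have "\<phi> t * exp (2 * l * t) * exp (- 2 * l * t) \<le> norm f ^ 2 * exp (- 2 * l * t)"
      by (rule mult_right_mono) simp
    then have "\<phi> t \<le> norm f ^ 2 * exp (- 2 * l * t)"
      by (simp add: mult.assoc exp_add[symmetric])
    then show ?thesis using True rl by (simp add: \<phi>n)
  next
    case False
    define q where "q = (2 - p) / 2"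
    define \<psi> where "\<psi> s = \<phi> s powr q / (2 - p) + l * s" for s
    have "\<psi> t \<le> \<psi> 0"
    proof (rule right_deriv_nonpos[OF assms(10), where D = "\<lambda>x. q * \<phi> x powr (q - 1) * (- 2 * inner (Z x) (u x)) / (2 - p) + l * 1"])
      have nz0: "\<forall>x\<in>{0..t}. \<phi> x \<noteq> 0" using \<phi>pos by force
      have "2 - p \<noteq> 0" using False by simp
      then show "continuous_on {0..t} \<psi>" unfolding \<psi>_def using c\<phi>t nz0
        by (intro continuous_intros) auto
      fix x assume x: "0 < x" "x < t"
      have px: "\<phi> x > 0" using \<phi>pos x by simp
      show "(\<psi> has_real_derivative q * \<phi> x powr (q - 1) * (- 2 * inner (Z x) (u x)) / (2 - p) + l * 1) (at x within {x..}) \<and>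
        q * \<phi> x powr (q - 1) * (- 2 * inner (Z x) (u x)) / (2 - p) + l * 1 \<le> 0"
      proof
        show "(\<psi> has_real_derivative q * \<phi> x powr (q - 1) * (- 2 * inner (Z x) (u x)) / (2 - p) + l * 1) (at x within {x..})"
          unfolding \<psi>_def
          by (intro DERIV_add DERIV_cdivide DERIV_chain2[OF has_real_derivative_powr[OF px] d\<phi>[OF x(1)]]
              DERIV_cmult DERIV_ident)
        define N where "N = norm (u x)"
        have N: "N > 0" using nz[of x] x by (simp add: N_def)
        have A: "\<phi> x powr (q - 1) = N powr (- p)"
        proof -
          have "2 * ((2 - p) / 2 - 1) = - p" by (simp add: field_simps)
          then show ?thesis unfolding \<phi>n N_def[symmetric] sq_powr[OF N] q_def by presburger
        qed
        have I: "l * N powr p \<le> inner (Z x) (u x)" using key[OF x(1)] by (simp add: N_def)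
        have "l = N powr (- p) * (l * N powr p)" using N by (simp add: powr_minus field_simps)
        also have "\<dots> \<le> N powr (- p) * inner (Z x) (u x)" using I by (intro mult_left_mono) auto
        finally have L: "l \<le> N powr (- p) * inner (Z x) (u x)" .
        have "q * \<phi> x powr (q - 1) * (- 2 * inner (Z x) (u x)) / (2 - p) + l * 1
            = l - N powr (- p) * inner (Z x) (u x)"
        proof -
          have "q * N powr (- p) * (- 2 * inner (Z x) (u x)) / (2 - p) + l * 1 = l - N powr (- p) * inner (Z x) (u x)"
            using False by (simp add: q_def field_simps)
          then show ?thesis by (simp only: A)
        qed
        then show "q * \<phi> x powr (q - 1) * (- 2 * inner (Z x) (u x)) / (2 - p) + l * 1 \<le> 0" using L by simp
      qed
    qed
    then have main: "norm (u t) powr (2 - p) / (2 - p) + l * t \<le> norm f powr (2 - p) / (2 - p)"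
      unfolding \<psi>_def q_def using pw[of t] pw[of 0] u0 assms(10) by simp
    show ?thesis
    proof (cases "p < 2")
      case True
      have nz2: "2 - p \<noteq> 0" using True by simp
      have "(2 - p) * (norm (u t) powr (2 - p) / (2 - p) + l * t) \<le> (2 - p) * (norm f powr (2 - p) / (2 - p))"
        by (rule mult_left_mono[OF main]) (use True in simp)
      then have "norm (u t) powr (2 - p) + (2 - p) * l * t \<le> norm f powr (2 - p)"
        using nz2 by (simp add: distrib_left)
      then have "norm (u t) powr (2 - p) \<le> norm f powr (2 - p) - (2 - p) * l * t" by simp
      then show ?thesis using True rl by simp
    next
      case p2: False
      then have gt: "p > 2" using False by simp
      have nz2: "2 - p \<noteq> 0" using gt by simp
      have "(2 - p) * (norm f powr (2 - p) / (2 - p)) \<le> (2 - p) * (norm (u t) powr (2 - p) / (2 - p) + l * t)"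
        by (rule mult_left_mono_neg[OF main]) (use gt in simp)
      then have "norm f powr (2 - p) \<le> norm (u t) powr (2 - p) + (2 - p) * l * t"
        using nz2 by (simp add: distrib_left)
      then have "norm (u t) powr (2 - p) \<ge> norm f powr (2 - p) + (p - 2) * l * t" by (simp add: algebra_simps)
      moreover have pos: "norm f powr (2 - p) + (p - 2) * l * t > 0"
        using f0 gt lpos assms(10) by (smt (verit) mult_nonneg_nonneg powr_gt_zero norm_eq_zero)
      ultimately have "1 / norm (u t) powr (2 - p) \<le> 1 / (norm f powr (2 - p) + (p - 2) * l * t)"
        by (intro divide_left_mono) (auto intro!: mult_pos_pos)
      moreover have "norm (u t) powr (p - 2) = 1 / norm (u t) powr (2 - p)"
        using powr_minus_divide[of "norm (u t)" "2 - p"] by simp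
      ultimately show ?thesis using gt rl by simp
    qed
  qed
qed

end
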